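(* Let $m,k\ge 1$, let $a,b>0$ and $z$ an integer with $0<z<k$, and let $p_*$ be the probability that a uniformly random $y\in\{0,1\}^k$ lies in the optimal region $\bar{X}_*=\{y\in\{0,1\}^k: f_{gen\_trap(k)}(y)>a\}$. Let $c>0$ be a constant ($c=\Omega(1)$). If a population of $\mu=\frac{c}{p_*}m$ bitstrings of length $mk$ is drawn independently and uniformly at random (each split into $m$ consecutive blocks of length $k$), then the probability that for every $i\in\{1,\dots,m\}$ at least one individual has its $i$-th block in $\bar{X}_*$ is at least $1-\epsilon$ with $\epsilon=me^{-cm}$, exponentially small in $m$.
   Context: Generalized trap function: for $y\in\{0,1\}^k$ with $u(y)$ ones, $f_{gen\_trap(k)}(y)=\frac{a}{z}(z-u(y))$ if $u(y)\le z$ and $f_{gen\_trap(k)}(y)=\frac{b}{k-z}(u(y)-z)$ otherwise. Equivalently $p_*=\Pr\big(\mathrm{Bin}(k,1/2)\ge \lceil a(k-z)/b\rceil+z\big)$. *)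

theory Defs
  imports "HOL-Probability.Probability"
begin

definition bitstrings :: "nat \<Rightarrow> (nat \<Rightarrow> bool) set" where
  "bitstrings n = {0..<n} \<rightarrow>\<^sub>E (UNIV :: bool set)"

definition ones :: "nat \<Rightarrow> (nat \<Rightarrow> bool) \<Rightarrow> nat" where
  "ones k y = card {j \<in> {0..<k}. y j}"

definition gen_trap :: "nat \<Rightarrow> real \<Rightarrow> real \<Rightarrow> nat \<Rightarrow> (nat \<Rightarrow> bool) \<Rightarrow> real" where
  "gen_trap k a b z y =
     (if ones k y \<le> z then a / real z * (real z - real (ones k y))
      else b / (real k - real z) * (real (ones k y) - real z))"

definition opt_region :: "nat \<Rightarrow> real \<Rightarrow> real \<Rightarrow> nat \<Rightarrow> (nat \<Rightarrow> bool) set" where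
  "opt_region k a b z = {y \<in> bitstrings k. gen_trap k a b z y > a}"

definition p_star :: "nat \<Rightarrow> real \<Rightarrow> real \<Rightarrow> nat \<Rightarrow> real" where
  "p_star k a b z = measure_pmf.prob (pmf_of_set (bitstrings k)) (opt_region k a b z)"

text \<open>The i-th block (i = 0..m-1) of length k of a bitstring x of length m*k.\<close>
definition block :: "nat \<Rightarrow> nat \<Rightarrow> (nat \<Rightarrow> bool) \<Rightarrow> (nat \<Rightarrow> bool)" where
  "block k i x = restrict (\<lambda>j. x (i * k + j)) {0..<k}"

definition populations :: "nat \<Rightarrow> nat \<Rightarrow> nat \<Rightarrow> (nat \<Rightarrow> nat \<Rightarrow> bool) set" where
  "populations mu m k = {0..<mu} \<rightarrow>\<^sub>E bitstrings (m * k)"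

end

theory Submission
  imports Defs
begin

lemma card_bitstrings: "card (bitstrings n) = 2 ^ n"
  unfolding bitstrings_def by (simp add: card_PiE)

lemma finite_bitstrings: "finite (bitstrings n)"
  unfolding bitstrings_def by (simp add: finite_PiE)

lemma pre_eq:
  assumes "i < m" "y \<in> bitstrings k"
  shows "{x \<in> bitstrings (m*k). block k i x = y} =
    PiE {0..<m*k} (\<lambda>t. if i*k \<le> t \<and> t < i*k+k then {y (t - i*k)} else UNIV)"
proof -
  have ik: "i*k + k \<le> m*k" using assms(1)
    by (metis add.commute mult_Suc mult_le_mono1 Suc_leI)
  have yext: "\<And>j. j \<ge> k \<Longrightarrow> y j = undefined" using assms(2)
    unfolding bitstrings_def by (auto simp: PiE_def extensional_def)
  show ?thesis
  proof (intro set_eqI iffI)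
    fix x assume "x \<in> {x \<in> bitstrings (m*k). block k i x = y}"
    then have xb: "x \<in> bitstrings (m*k)" and bl: "block k i x = y" by auto
    have "\<And>t. i*k \<le> t \<Longrightarrow> t < i*k+k \<Longrightarrow> x t = y (t - i*k)"
    proof -
      fix t assume "i*k \<le> t" "t < i*k+k"
      then have "block k i x (t - i*k) = x t" unfolding block_def by auto
      then show "x t = y (t - i*k)" using bl by simp
    qed
    then show "x \<in> PiE {0..<m*k} (\<lambda>t. if i*k \<le> t \<and> t < i*k+k then {y (t - i*k)} else UNIV)"
      using xb unfolding bitstrings_def by (auto simp: PiE_def Pi_def)
  next
    fix x assume x: "x \<in> PiE {0..<m*k} (\<lambda>t. if i*k \<le> t \<and> t < i*k+k then {y (t - i*k)} else UNIV)"
    have xb: "x \<in> bitstrings (m*k)" using x unfolding bitstrings_def by (auto simp: PiE_def)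
    have "block k i x = y"
    proof
      fix j show "block k i x j = y j"
      proof (cases "j < k")
        case True
        then have "i*k+j < m*k" using ik by linarith
        then have "x (i*k+j) \<in> {y j}" using x True by (auto simp: PiE_def Pi_def)
        then show ?thesis using True unfolding block_def by simp
      next
        case False then show ?thesis using yext unfolding block_def by simp
      qed
    qed
    then show "x \<in> {x \<in> bitstrings (m*k). block k i x = y}" using xb by simp
  qed
qed

lemma card_pre:
  assumes "i < m" "y \<in> bitstrings k"
  shows "card {x \<in> bitstrings (m*k). block k i x = y} = 2 ^ (m*k - k)"
proof -
  have ik: "i*k + k \<le> m*k" using assms(1)
    by (metis add.commute mult_Suc mult_le_mono1 Suc_leI)
  let ?P = "\<lambda>t. i*k \<le> t \<and> t < i*k+k"
  have "card {x \<in> bitstrings (m*k). block k i x = y} =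
     (\<Prod>t\<in>{0..<m*k}. card (if ?P t then {y (t - i*k)} else (UNIV::bool set)))"
    using pre_eq[OF assms] by (simp add: card_PiE)
  also have "\<dots> = (\<Prod>t\<in>{0..<m*k}. if ?P t then 1 else 2)"
    by (rule prod.cong) auto
  also have "\<dots> = (\<Prod>t\<in>{0..<m*k} \<inter> {t. ?P t}. 1) * (\<Prod>t\<in>{0..<m*k} \<inter> - {t. ?P t}. 2)"
    by (rule prod.If_cases) simp
  also have "\<dots> = 2 ^ card ({0..<m*k} \<inter> - {t. ?P t})" by simp
  also have "card ({0..<m*k} \<inter> - {t. ?P t}) = m*k - k"
  proof -
    have e: "{0..<m*k} \<inter> {t. ?P t} = {i*k..<i*k+k}" using ik by auto
    have "card ({0..<m*k} \<inter> {t. ?P t}) + card ({0..<m*k} \<inter> - {t. ?P t}) = card {0..<m*k}"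
      proof (subst card_Un_disjoint[symmetric])
        have "{0..<m*k} \<inter> {t. ?P t} \<union> {0..<m*k} \<inter> - {t. ?P t} = {0..<m*k}" by blast
        then show "card ({0..<m*k} \<inter> {t. ?P t} \<union> {0..<m*k} \<inter> - {t. ?P t}) = card {0..<m*k}" by simp
      qed auto
    then show ?thesis using e by simp
  qed
  finally show ?thesis .
qed

lemma card_good_block:
  assumes "i < m" "X \<subseteq> bitstrings k"
  shows "card {x \<in> bitstrings (m*k). block k i x \<in> X} = card X * 2 ^ (m*k - k)"
proof -
  have fX: "finite X" using assms(2) finite_bitstrings finite_subset by blast
  have "{x \<in> bitstrings (m*k). block k i x \<in> X} = (\<Union>y\<in>X. {x \<in> bitstrings (m*k). block k i x = y})"
    by auto
  also have "card \<dots> = (\<Sum>y\<in>X. card {x \<in> bitstrings (m*k). block k i x = y})"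
    by (rule card_UN_disjoint) (auto simp: fX finite_bitstrings)
  also have "\<dots> = (\<Sum>y\<in>X. 2 ^ (m*k - k))"
    using card_pre[OF assms(1)] assms(2) by (intro sum.cong) auto
  finally show ?thesis by simp
qed

theorem lemma7p1:
  fixes m k z mu :: nat and a b c :: real
  assumes "m \<ge> 1" and "k \<ge> 1"
    and "a > 0" and "b > 0"
    and "0 < z" and "z < k"
    and "c > 0"
    and "p_star k a b z > 0"
    and "real mu = c / p_star k a b z * real m"
  shows "measure_pmf.prob (pmf_of_set (populations mu m k))
           {P \<in> populations mu m k. \<forall>i<m. \<exists>j<mu. block k i (P j) \<in> opt_region k a b z}
         \<ge> 1 - real m * exp (- c * real m)"
proof -
  define X where "X = opt_region k a b z"
  define p where "p = p_star k a b z"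
  define N where "N = m * k"
  define A where "A = bitstrings N"
  define pop where "pop = populations mu m k"
  have XA: "X \<subseteq> bitstrings k" unfolding X_def opt_region_def by auto
  have Nk: "N - k + k = N" unfolding N_def using assms(1)
    by (metis le_add_diff_inverse2 mult_le_mono1 mult_1)
  have bne: "bitstrings n \<noteq> {}" for n
    unfolding bitstrings_def by (simp add: PiE_eq_empty_iff)
  have p_eq: "p = card X / 2 ^ k"
    unfolding p_def p_star_def
    using measure_pmf_of_set[OF bne finite_bitstrings, of k X] XA
    by (simp add: card_bitstrings Int_absorb1 X_def)
  have p0: "p > 0" using assms(8) p_def by simp
  have p1: "p \<le> 1" using XA p_eq card_mono[OF finite_bitstrings XA]
    by (simp add: card_bitstrings)
  define G where "G i = {x \<in> A. block k i x \<notin> X}" for i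
  have cardG: "real (card (G i)) = 2 ^ N * (1 - p)" if "i < m" for i
  proof -
    have "G i = A - {x \<in> A. block k i x \<in> X}" unfolding G_def by auto
    then have "card (G i) = card A - card {x \<in> A. block k i x \<in> X}"
      by (simp add: card_Diff_subset A_def finite_bitstrings finite_subset)
    moreover have "card {x \<in> A. block k i x \<in> X} \<le> card A"
      by (rule card_mono) (auto simp: A_def finite_bitstrings)
    ultimately have "real (card (G i)) = real (card A) - real (card {x \<in> A. block k i x \<in> X})"
      by simp
    also have "\<dots> = 2 ^ N - real (card X) * 2 ^ (N - k)"
      using card_good_block[OF that XA] by (simp add: A_def card_bitstrings N_def)
    also have "\<dots> = 2 ^ N * (1 - p)"
    proof -
      have "(2::real) ^ N = 2 ^ (N - k) * 2 ^ k" using Nk by (metis power_add)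
      then show ?thesis unfolding p_eq by (simp add: field_simps)
    qed
    finally show ?thesis .
  qed
  have fA: "finite A" by (simp add: A_def finite_bitstrings)
  have popE: "pop = PiE {0..<mu} (\<lambda>_. A)"
    unfolding pop_def populations_def A_def N_def ..
  have fpop: "finite pop" using popE fA by (simp add: finite_PiE)
  have popne: "pop \<noteq> {}" using popE bne A_def by (simp add: PiE_eq_empty_iff)
  have cardpop: "real (card pop) = (2 ^ N) ^ mu"
    using popE by (simp add: card_PiE A_def card_bitstrings)
  define Bad where "Bad i = {P \<in> pop. \<forall>j<mu. block k i (P j) \<notin> X}" for i
  have BadE: "Bad i = PiE {0..<mu} (\<lambda>_. G i)" for i
    unfolding Bad_def popE G_def by (auto simp: PiE_def Pi_def)
  have cardBad: "real (card (Bad i)) = (2 ^ N) ^ mu * (1 - p) ^ mu" if "i < m" for i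
    using BadE[of i] cardG[OF that] by (simp add: card_PiE power_mult_distrib)
  define Good where "Good = {P \<in> pop. \<forall>i<m. \<exists>j<mu. block k i (P j) \<in> X}"
  have GoodE: "Good = pop - (\<Union>i<m. Bad i)" unfolding Good_def Bad_def by auto
  have sub: "pop \<subseteq> Good \<union> (\<Union>i<m. Bad i)" unfolding GoodE by blast
  have fU: "finite (Good \<union> (\<Union>i<m. Bad i))" using fpop unfolding GoodE Bad_def by auto
  have n1: "card pop \<le> card (Good \<union> (\<Union>i<m. Bad i))" by (rule card_mono[OF fU sub])
  have n2: "card (Good \<union> (\<Union>i<m. Bad i)) \<le> card Good + card (\<Union>i<m. Bad i)" by (rule card_Un_le)
  have n3: "card (\<Union>i<m. Bad i) \<le> (\<Sum>i<m. card (Bad i))" by (rule card_UN_le) simp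
  have natineq: "card pop \<le> card Good + (\<Sum>i<m. card (Bad i))" using n1 n2 n3 by linarith
  have "real (card pop) \<le> real (card Good) + (\<Sum>i<m. real (card (Bad i)))"
    using of_nat_mono[OF natineq, where 'a=real] by simp
  also have "(\<Sum>i<m. real (card (Bad i))) = real m * ((2 ^ N) ^ mu * (1 - p) ^ mu)"
    using cardBad by simp
  finally have ineq: "(2 ^ N) ^ mu * (1 - real m * (1 - p) ^ mu) \<le> real (card Good)"
    unfolding cardpop by (simp add: algebra_simps)
  have "(1 - p) ^ mu \<le> exp (- p) ^ mu"
    by (rule power_mono) (use p1 exp_ge_add_one_self[of "-p"] in auto)
  also have "\<dots> = exp (- c * real m)"
    using assms(9) p0 unfolding p_def[symmetric] by (simp add: exp_of_nat_mult[symmetric])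
  finally have e: "(1 - p) ^ mu \<le> exp (- c * real m)" .
  have "measure_pmf.prob (pmf_of_set pop) Good = card Good / card pop"
    using measure_pmf_of_set[OF popne fpop, of Good] unfolding Good_def
    by (simp add: Int_absorb1)
  also have "\<dots> \<ge> 1 - real m * (1 - p) ^ mu"
    using ineq cardpop by (simp add: field_simps)
  finally have "measure_pmf.prob (pmf_of_set pop) Good \<ge> 1 - real m * (1 - p) ^ mu" .
  moreover have "1 - real m * exp (- c * real m) \<le> 1 - real m * (1 - p) ^ mu"
    using e by (simp add: mult_left_mono)
  ultimately show ?thesis unfolding Good_def pop_def X_def by linarith
qed

end
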